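(* Let $T\in B(\mathcal{F})$ be a block-diagonal operator and let $(A_n)_{n\ge0}$ be its sequence of $\mathcal{C}$-approximants (defined in the context). Then for every $n\ge0$ and every $m\ge0$, \[A_n|_{\mathcal{F}_m}=\begin{cases}T|_{\mathcal{F}_m}&\text{if }m\le n,\\ (T|_{\mathcal{F}_n})\otimes I_{m-n}&\text{if }m>n,\end{cases}\] where $(T|_{\mathcal{F}_n})\otimes I_{m-n}$ acts on $\mathcal{F}_m=\mathcal{F}_n\otimes\mathcal{F}_{m-n}$ and $I_{m-n}$ is the identity of $\mathcal{F}_{m-n}$.
   Context: $d\ge2$; $\xi_1,\ldots,\xi_d$ is the standard orthonormal basis of $\mathbb{C}^d$. $\mathcal{F}=\bigoplus_{n\ge0}\mathcal{F}_n$ is the full Fock space, $\mathcal{F}_0=\mathbb{C}\Omega$, $\mathcal{F}_n=(\mathbb{C}^d)^{\otimes n}$ with the usual inner product. $L_j\eta=\xi_j\otimes\eta$ (and $L_j\Omega=\xi_j$) are the left creation operators, $\mathcal{C}=C^*(L_1,\ldots,L_d)$. $T$ is block-diagonal if $T(\mathcal{F}_n)\subseteq\mathcal{F}_n$ for all $n$. The $\mathcal{C}$-approximants of $T$ are defined recursively by $A_0=\langle T\Omega,\Omega\rangle I_{\mathcal{F}}$ and, for $n\ge0$, $A_{n+1}=A_n+\sum c_{i_1,\ldots,i_{n+1};j_1,\ldots,j_{n+1}}(L_{i_1}\cdots L_{i_{n+1}})(L_{j_1}\cdots L_{j_{n+1}})^*$, the sum over all $1\le i_1,\ldots,i_{n+1},j_1,\ldots,j_{n+1}\le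 d$, with $c_{i_1,\ldots,i_{n+1};j_1,\ldots,j_{n+1}}=\langle T(\xi_{j_1}\otimes\cdots\otimes\xi_{j_{n+1}}),\xi_{i_1}\otimes\cdots\otimes\xi_{i_{n+1}}\rangle-\delta_{i_{n+1},j_{n+1}}\langle T(\xi_{j_1}\otimes\cdots\otimes\xi_{j_n}),\xi_{i_1}\otimes\cdots\otimes\xi_{i_n}\rangle$ (for $n=0$ the second inner product is $\langle T\Omega,\Omega\rangle$). *)

theory Defs
  imports "HOL-Analysis.Analysis"
begin

text \<open>The orthonormal basis vector xi_{i1} (x) ... (x) xi_{in}
  of F_n is indexed by the word [i1,...,in] (letters 0..d-1, i.e. xi_{k+1} is letter k);
  Omega is the empty word.\<close>

type_synonym vec = "nat list \<Rightarrow> complex"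

definition valid_word :: "nat \<Rightarrow> nat list \<Rightarrow> bool" where
  "valid_word d w \<longleftrightarrow> (\<forall>i\<in>set w. i < d)"

definition words :: "nat \<Rightarrow> nat \<Rightarrow> nat list set" where
  "words d n = {w. length w = n \<and> valid_word d w}"

definition fock :: "nat \<Rightarrow> vec set" where
  "fock d = {x. (\<forall>w. x w \<noteq> 0 \<longrightarrow> valid_word d w) \<and> (\<lambda>w. (cmod (x w))\<^sup>2) summable_on UNIV}"

definition fock_norm2 :: "vec \<Rightarrow> real" where
  "fock_norm2 x = infsum (\<lambda>w. (cmod (x w))\<^sup>2) UNIV"

definition Fn :: "nat \<Rightarrow> nat \<Rightarrow> vec set" where
  "Fn d n = {x. \<forall>w. x w \<noteq> 0 \<longrightarrow> w \<in> words d n}"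

definition basis_vec :: "nat list \<Rightarrow> vec" where
  "basis_vec J = (\<lambda>w. if w = J then 1 else 0)"

definition bounded_linear_fock :: "nat \<Rightarrow> (vec \<Rightarrow> vec) \<Rightarrow> bool" where
  "bounded_linear_fock d T \<longleftrightarrow>
     (\<forall>x\<in>fock d. T x \<in> fock d) \<and>
     (\<forall>x\<in>fock d. \<forall>y\<in>fock d. T (\<lambda>w. x w + y w) = (\<lambda>w. T x w + T y w)) \<and>
     (\<forall>x\<in>fock d. \<forall>c. T (\<lambda>w. c * x w) = (\<lambda>w. c * T x w)) \<and>
     (\<exists>C. \<forall>x\<in>fock d. fock_norm2 (T x) \<le> C * fock_norm2 x)"

definition block_diagonal :: "nat \<Rightarrow> (vec \<Rightarrow> vec) \<Rightarrow> bool" where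
  "block_diagonal d T \<longleftrightarrow> (\<forall>n. \<forall>x\<in>Fn d n. T x \<in> Fn d n)"

definition Lc :: "nat \<Rightarrow> vec \<Rightarrow> vec" where
  "Lc i x = (\<lambda>v. if v \<noteq> [] \<and> hd v = i then x (tl v) else 0)"

definition Lstar :: "nat \<Rightarrow> vec \<Rightarrow> vec" where
  "Lstar i x = (\<lambda>w. x (i # w))"

fun Lword :: "nat list \<Rightarrow> vec \<Rightarrow> vec" where
  "Lword [] = id"
| "Lword (i # I) = Lc i \<circ> Lword I"

fun Lword_star :: "nat list \<Rightarrow> vec \<Rightarrow> vec" where
  "Lword_star [] = id"
| "Lword_star (j # J) = Lword_star J \<circ> Lstar j"

definition entry :: "(vec \<Rightarrow> vec) \<Rightarrow> nat list \<Rightarrow> nat list \<Rightarrow> complex" where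
  "entry T I J = T (basis_vec J) I"

text \<open>Coefficient c_{I;J} for words I, J of length n+1 (butlast [i] = [] gives Omega).\<close>
definition coef :: "(vec \<Rightarrow> vec) \<Rightarrow> nat list \<Rightarrow> nat list \<Rightarrow> complex" where
  "coef T I J = entry T I J
     - (if last I = last J then entry T (butlast I) (butlast J) else 0)"

fun approx :: "nat \<Rightarrow> (vec \<Rightarrow> vec) \<Rightarrow> nat \<Rightarrow> vec \<Rightarrow> vec" where
  "approx d T 0 = (\<lambda>x w. entry T [] [] * x w)"
| "approx d T (Suc n) = (\<lambda>x w. approx d T n x w +
      (\<Sum>I\<in>words d (Suc n). \<Sum>J\<in>words d (Suc n).
          coef T I J * Lword I (Lword_star J x) w))"

text \<open>Tensor product of f in F_n with g, under F_{n+k} = F_n (x) F_k (concatenation).\<close>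
definition tensor :: "nat \<Rightarrow> vec \<Rightarrow> vec \<Rightarrow> vec" where
  "tensor n f g = (\<lambda>z. f (take n z) * g (drop n z))"

definition restr_tensor_id :: "nat \<Rightarrow> (vec \<Rightarrow> vec) \<Rightarrow> nat \<Rightarrow> nat \<Rightarrow> vec \<Rightarrow> vec" where
  "restr_tensor_id d T n m x =
     (\<lambda>z. \<Sum>w\<in>words d m. x w * tensor n (T (basis_vec (take n w))) (basis_vec (drop n w)) z)"

end

theory Submission
  imports Defs
begin

lemma finite_words: "finite (words d n)"
proof -
  have "words d n \<subseteq> {xs. set xs \<subseteq> {..<d} \<and> length xs = n}"
    by (auto simp: words_def valid_word_def)
  thus ?thesis by (rule finite_subset) (rule finite_lists_length_eq, simp)
qed

lemma fock_fin:
  assumes "finite A" "A \<subseteq> words d m" "\<And>v. v \<notin> A \<Longrightarrow> x v = 0"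
  shows "x \<in> fock d"
proof -
  have "(\<lambda>w. (cmod (x w))\<^sup>2) summable_on UNIV \<longleftrightarrow> (\<lambda>w. (cmod (x w))\<^sup>2) summable_on A"
    by (rule summable_on_cong_neutral) (auto simp: assms(3))
  moreover have "(\<lambda>w. (cmod (x w))\<^sup>2) summable_on A" using assms(1) by simp
  moreover have "\<forall>w. x w \<noteq> 0 \<longrightarrow> valid_word d w" using assms(2,3) by (auto simp: words_def)
  ultimately show ?thesis by (simp add: fock_def)
qed

lemma Fn_zero: "y \<in> Fn d k \<Longrightarrow> w \<notin> words d k \<Longrightarrow> y w = 0"
  by (auto simp: Fn_def)

lemma basis_Fn: "w \<in> words d m \<Longrightarrow> basis_vec w \<in> Fn d m"
  by (auto simp: Fn_def basis_vec_def)

lemma Te_Fn: "block_diagonal d T \<Longrightarrow> J \<in> words d k \<Longrightarrow> T (basis_vec J) \<in> Fn d k"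
  by (auto simp: block_diagonal_def basis_Fn)

lemma addT: "bounded_linear_fock d T \<Longrightarrow> x \<in> fock d \<Longrightarrow> y \<in> fock d \<Longrightarrow>
   T (\<lambda>w. x w + y w) = (\<lambda>w. T x w + T y w)"
  unfolding bounded_linear_fock_def by blast

lemma smulT: "bounded_linear_fock d T \<Longrightarrow> x \<in> fock d \<Longrightarrow>
   T (\<lambda>w. c * x w) = (\<lambda>w. c * T x w)"
  unfolding bounded_linear_fock_def by blast

lemma lin:
  assumes bl: "bounded_linear_fock d T" and fin: "finite A" and sub: "A \<subseteq> words d m"
  shows "T (\<lambda>v. \<Sum>w\<in>A. c w * basis_vec w v) = (\<lambda>v. \<Sum>w\<in>A. c w * T (basis_vec w) v)"
  using fin sub
proof (induction A rule: finite_induct)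
  case empty
  have z: "(\<lambda>_. 0::complex) \<in> fock d" by (rule fock_fin[of "{}" d m]) auto
  have "\<forall>x\<in>fock d. \<forall>c. T (\<lambda>w. c * x w) = (\<lambda>w. c * T x w)"
    using bl unfolding bounded_linear_fock_def by blast
  hence "\<forall>c. T (\<lambda>w. c * (\<lambda>_. 0::complex) w) = (\<lambda>w. c * T (\<lambda>_. 0) w)"
    using z by (rule bspec)
  hence "T (\<lambda>w. 0 * (\<lambda>_. 0::complex) w) = (\<lambda>w. 0 * T (\<lambda>_. 0) w)"
    by (rule spec)
  thus ?case by simp
next
  case (insert a F)
  let ?x = "\<lambda>v. c a * basis_vec a v"
  let ?y = "\<lambda>v. \<Sum>w\<in>F. c w * basis_vec w v"
  have ea: "basis_vec a \<in> fock d"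
    by (rule fock_fin[of "{a}" d m]) (use insert in \<open>auto simp: basis_vec_def\<close>)
  have xf: "?x \<in> fock d"
    by (rule fock_fin[of "{a}" d m]) (use insert in \<open>auto simp: basis_vec_def\<close>)
  have yf: "?y \<in> fock d"
    by (rule fock_fin[of F d m]) (use insert in \<open>auto simp: basis_vec_def intro!: sum.neutral\<close>)
  have "T (\<lambda>v. \<Sum>w\<in>insert a F. c w * basis_vec w v) = T (\<lambda>v. ?x v + ?y v)"
    using insert by simp
  also have "\<dots> = (\<lambda>v. T ?x v + T ?y v)"
    by (rule addT[OF bl xf yf])
  also have "T ?x = (\<lambda>v. c a * T (basis_vec a) v)"
    by (rule smulT[OF bl ea])
  finally show ?case using insert by simp
qed

lemma expand:
  assumes "x \<in> Fn d m"
  shows "x = (\<lambda>v. \<Sum>w\<in>words d m. x w * basis_vec w v)"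
proof
  fix v
  have "(\<Sum>w\<in>words d m. x w * basis_vec w v) = (\<Sum>w\<in>words d m. if w = v then x w else 0)"
    by (rule sum.cong) (auto simp: basis_vec_def)
  also have "\<dots> = (if v \<in> words d m then x v else 0)"
    using finite_words by (simp add: sum.delta')
  also have "\<dots> = x v" using assms by (auto simp: Fn_def)
  finally show "x v = (\<Sum>w\<in>words d m. x w * basis_vec w v)" by simp
qed

lemma Tlin:
  assumes "bounded_linear_fock d T" "x \<in> Fn d m"
  shows "T x = (\<lambda>v. \<Sum>w\<in>words d m. x w * T (basis_vec w) v)"
proof -
  have "T x = T (\<lambda>v. \<Sum>w\<in>words d m. x w * basis_vec w v)"
    using expand[OF assms(2)] by simp
  also have "\<dots> = (\<lambda>v. \<Sum>w\<in>words d m. x w * T (basis_vec w) v)"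
    by (rule lin[OF assms(1) finite_words subset_refl])
  finally show ?thesis .
qed

lemma Lword_star_eq: "Lword_star J x = (\<lambda>w. x (J @ w))"
  by (induction J arbitrary: x) (auto simp: Lstar_def)

lemma Lword_eq: "Lword I y = (\<lambda>v. if take (length I) v = I then y (drop (length I) v) else 0)"
proof (induction I)
  case Nil thus ?case by simp
next
  case (Cons i I)
  show ?case
  proof
    fix v show "Lword (i # I) y v = (if take (length (i # I)) v = i # I then y (drop (length (i # I)) v) else 0)"
      using Cons by (cases v) (auto simp: Lc_def)
  qed
qed

lemma split_sum:
  assumes "k \<le> m" "length r = m - k" "valid_word d r"
  shows "(\<Sum>w\<in>words d m. if drop k w = r then g (take k w) else 0) = (\<Sum>J\<in>words d k. g J)"
proof -
  have "(\<Sum>w\<in>words d m. if drop k w = r then g (take k w) else 0)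
      = (\<Sum>w\<in>{w\<in>words d m. drop k w = r}. g (take k w))"
    using finite_words by (simp add: sum.inter_filter)
  also have "{w\<in>words d m. drop k w = r} = (\<lambda>J. J @ r) ` words d k"
  proof (rule set_eqI, rule iffI)
    fix w assume w: "w \<in> {w\<in>words d m. drop k w = r}"
    hence "w = take k w @ r" by (metis (mono_tags, lifting) append_take_drop_id mem_Collect_eq)
    moreover have "take k w \<in> words d k" using w assms(1)
      by (auto simp: words_def valid_word_def dest: in_set_takeD)
    ultimately show "w \<in> (\<lambda>J. J @ r) ` words d k" by blast
  next
    fix w assume "w \<in> (\<lambda>J. J @ r) ` words d k"
    then obtain J where "J \<in> words d k" "w = J @ r" by blast
    thus "w \<in> {w\<in>words d m. drop k w = r}" using assms
      by (auto simp: words_def valid_word_def)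
  qed
  also have "(\<Sum>w\<in>(\<lambda>J. J @ r) ` words d k. g (take k w)) = (\<Sum>J\<in>words d k. g (take k (J @ r)))"
    by (rule sum.reindex[unfolded comp_def]) (auto simp: inj_on_def)
  also have "\<dots> = (\<Sum>J\<in>words d k. g J)"
    by (rule sum.cong) (auto simp: words_def)
  finally show ?thesis .
qed


lemma restr_eq:
  assumes "k \<le> m" "x \<in> Fn d m"
  shows "restr_tensor_id d T k m x v = (\<Sum>J\<in>words d k. x (J @ drop k v) * T (basis_vec J) (take k v))"
proof -
  let ?r = "drop k v"
  have L: "restr_tensor_id d T k m x v =
     (\<Sum>w\<in>words d m. if drop k w = ?r then x (take k w @ ?r) * T (basis_vec (take k w)) (take k v) else 0)"
    unfolding restr_tensor_id_def tensor_def
    by (rule sum.cong) (auto simp: basis_vec_def, metis append_take_drop_id)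
  show ?thesis
  proof (cases "length ?r = m - k \<and> valid_word d ?r")
    case True
    show ?thesis unfolding L
      by (rule split_sum[OF assms(1)]) (use True in auto)
  next
    case False
    have "(\<Sum>w\<in>words d m. if drop k w = ?r then x (take k w @ ?r) * T (basis_vec (take k w)) (take k v) else 0) = 0"
    proof (rule sum.neutral, rule ballI)
      fix w assume w: "w \<in> words d m"
      have "drop k w \<noteq> ?r"
      proof
        assume h: "drop k w = ?r"
        have "length ?r = m - k" using w h[symmetric] by (simp add: words_def)
        moreover have "valid_word d ?r" using w h[symmetric]
          by (auto simp: words_def valid_word_def dest: in_set_dropD)
        ultimately show False using False by simp
      qed
      thus "(if drop k w = ?r then x (take k w @ ?r) * T (basis_vec (take k w)) (take k v) else 0) = 0" by simp
    qed
    moreover have "(\<Sum>J\<in>words d k. x (J @ drop k v) * T (basis_vec J) (take k v)) = 0"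
    proof (rule sum.neutral, rule ballI)
      fix J assume J: "J \<in> words d k"
      have "J @ ?r \<notin> words d m" using False J assms(1) by (auto simp: words_def valid_word_def)
      thus "x (J @ drop k v) * T (basis_vec J) (take k v) = 0" using Fn_zero[OF assms(2)] by simp
    qed
    ultimately show ?thesis using L by simp
  qed
qed

lemma restr_same:
  assumes bl: "bounded_linear_fock d T" and bd: "block_diagonal d T" and x: "x \<in> Fn d m"
  shows "restr_tensor_id d T m m x = T x"
proof
  fix v
  have "restr_tensor_id d T m m x v = (\<Sum>J\<in>words d m. x (J @ drop m v) * T (basis_vec J) (take m v))"
    by (rule restr_eq[OF le_refl x])
  also have "\<dots> = (\<Sum>J\<in>words d m. x J * T (basis_vec J) v)"
  proof (rule sum.cong[OF refl])
    fix J assume J: "J \<in> words d m"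
    show "x (J @ drop m v) * T (basis_vec J) (take m v) = x J * T (basis_vec J) v"
    proof (cases "length v \<le> m")
      case True thus ?thesis by simp
    next
      case False
      have "J @ drop m v \<notin> words d m" using False J by (auto simp: words_def)
      moreover have "v \<notin> words d m" using False by (auto simp: words_def)
      ultimately show ?thesis using Fn_zero[OF x] Fn_zero[OF Te_Fn[OF bd J]] by simp
    qed
  qed
  also have "\<dots> = T x v" using Tlin[OF bl x] by simp
  finally show "restr_tensor_id d T m m x v = T x v" .
qed

lemma S_eq:
  "(\<Sum>I\<in>words d (Suc n). \<Sum>J\<in>words d (Suc n). coef T I J * Lword I (Lword_star J x) v)
   = (if take (Suc n) v \<in> words d (Suc n)
      then \<Sum>J\<in>words d (Suc n). coef T (take (Suc n) v) J * x (J @ drop (Suc n) v) else 0)"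
proof -
  have "(\<Sum>I\<in>words d (Suc n). \<Sum>J\<in>words d (Suc n). coef T I J * Lword I (Lword_star J x) v)
     = (\<Sum>I\<in>words d (Suc n). if I = take (Suc n) v then
          \<Sum>J\<in>words d (Suc n). coef T (take (Suc n) v) J * x (J @ drop (Suc n) v) else 0)"
    by (rule sum.cong[OF refl]) (auto simp: Lword_eq Lword_star_eq words_def)
  also have "\<dots> = (if take (Suc n) v \<in> words d (Suc n)
      then \<Sum>J\<in>words d (Suc n). coef T (take (Suc n) v) J * x (J @ drop (Suc n) v) else 0)"
    using finite_words[of d "Suc n"] by (simp add: sum.delta)
  finally show ?thesis .
qed


lemma len_Suc_parts:
  assumes "length J = Suc n"
  shows "drop n J = [last J]" "butlast J = take n J"
proof -
  have J: "J = butlast J @ [last J]" using assms by (metis append_butlast_last_id list.size(3) nat.simps(3))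
  have lb: "length (butlast J) = n" using assms by simp
  have "drop n (butlast J @ [last J]) = [last J]" using lb by simp
  thus "drop n J = [last J]" using J by metis
  have "take n (butlast J @ [last J]) = butlast J" using lb by simp
  thus "butlast J = take n J" using J by metis
qed

lemma key:
  assumes bd: "block_diagonal d T" and nm: "n < m" and x: "x \<in> Fn d m"
  shows "(\<Sum>J\<in>words d n. x (J @ drop n v) * T (basis_vec J) (take n v))
    + (if take (Suc n) v \<in> words d (Suc n)
      then \<Sum>J\<in>words d (Suc n). coef T (take (Suc n) v) J * x (J @ drop (Suc n) v) else 0)
    = (\<Sum>J\<in>words d (Suc n). x (J @ drop (Suc n) v) * T (basis_vec J) (take (Suc n) v))"
proof (cases "length v \<le> n")
  case True
  have a: "(\<Sum>J\<in>words d n. x (J @ drop n v) * T (basis_vec J) (take n v)) = 0"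
  proof (rule sum.neutral, rule ballI)
    fix J assume "J \<in> words d n"
    hence "J @ drop n v \<notin> words d m" using True nm by (auto simp: words_def)
    thus "x (J @ drop n v) * T (basis_vec J) (take n v) = 0" using Fn_zero[OF x] by simp
  qed
  have b: "take (Suc n) v \<notin> words d (Suc n)" using True by (auto simp: words_def)
  have c: "(\<Sum>J\<in>words d (Suc n). x (J @ drop (Suc n) v) * T (basis_vec J) (take (Suc n) v)) = 0"
    by (rule sum.neutral, rule ballI) (use Fn_zero[OF Te_Fn[OF bd] b] in auto)
  show ?thesis using a b c by simp
next
  case False
  define i where "i = v ! n"
  define I0 where "I0 = take n v"
  define r where "r = drop (Suc n) v"
  have dn: "drop n v = i # r" using False unfolding i_def r_def by (simp add: Cons_nth_drop_Suc)
  have tS: "take (Suc n) v = I0 @ [i]" using False unfolding i_def I0_def by (simp add: take_Suc_conv_app_nth)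
  have lI0: "length I0 = n" using False unfolding I0_def by simp
  show ?thesis
  proof (cases "I0 @ [i] \<in> words d (Suc n)")
    case True
    have I0w: "I0 \<in> words d n" and id: "i < d" using True lI0 by (auto simp: words_def valid_word_def)
    have "(\<Sum>J\<in>words d (Suc n). coef T (I0 @ [i]) J * x (J @ r))
      = (\<Sum>J\<in>words d (Suc n). x (J @ r) * T (basis_vec J) (I0 @ [i]))
       - (\<Sum>J\<in>words d (Suc n). if drop n J = [i] then T (basis_vec (take n J)) I0 * x (take n J @ i # r) else 0)"
      unfolding sum_subtractf[symmetric]
    proof (rule sum.cong[OF refl])
      fix J assume J: "J \<in> words d (Suc n)"
      hence lJ: "length J = Suc n" by (simp add: words_def)
      note p = len_Suc_parts[OF lJ]
      have JJ: "J = take n J @ [last J]" using p by (metis append_take_drop_id)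
      show "coef T (I0 @ [i]) J * x (J @ r) = x (J @ r) * T (basis_vec J) (I0 @ [i]) -
         (if drop n J = [i] then T (basis_vec (take n J)) I0 * x (take n J @ i # r) else 0)"
      proof (cases "last J = i")
        case True
        have "x (J @ r) = x (take n J @ i # r)" using JJ True by (metis append_Cons append_assoc self_append_conv2)
        thus ?thesis using True p by (simp add: coef_def entry_def algebra_simps)
      next
        case False thus ?thesis using p by (auto simp: coef_def entry_def algebra_simps)
      qed
    qed
    also have "(\<Sum>J\<in>words d (Suc n). if drop n J = [i] then T (basis_vec (take n J)) I0 * x (take n J @ i # r) else 0)
       = (\<Sum>J0\<in>words d n. T (basis_vec J0) I0 * x (J0 @ i # r))"
      by (rule split_sum) (use id in \<open>auto simp: valid_word_def\<close>)
    finally have S: "(\<Sum>J\<in>words d (Suc n). coef T (I0 @ [i]) J * x (J @ r))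
      = (\<Sum>J\<in>words d (Suc n). x (J @ r) * T (basis_vec J) (I0 @ [i]))
       - (\<Sum>J0\<in>words d n. T (basis_vec J0) I0 * x (J0 @ i # r))" .
    show ?thesis unfolding tS dn I0_def[symmetric] r_def[symmetric] using True S
      by (simp add: mult.commute)
  next
    case False
    have c: "(\<Sum>J\<in>words d (Suc n). x (J @ r) * T (basis_vec J) (I0 @ [i])) = 0"
      by (rule sum.neutral, rule ballI) (use Fn_zero[OF Te_Fn[OF bd] False] in auto)
    have a: "(\<Sum>J\<in>words d n. x (J @ i # r) * T (basis_vec J) I0) = 0"
    proof (rule sum.neutral, rule ballI)
      fix J assume J: "J \<in> words d n"
      show "x (J @ i # r) * T (basis_vec J) I0 = 0"
      proof (cases "I0 \<in> words d n")
        case True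
        hence "\<not> i < d" using False lI0 by (auto simp: words_def valid_word_def)
        hence "J @ i # r \<notin> words d m" by (auto simp: words_def valid_word_def)
        thus ?thesis using Fn_zero[OF x] by simp
      next
        case False thus ?thesis using Fn_zero[OF Te_Fn[OF bd J] False] by simp
      qed
    qed
    show ?thesis unfolding tS dn I0_def[symmetric] r_def[symmetric] using False a c by simp
  qed
qed

theorem lemma3p2:
  fixes d :: nat and T :: "vec \<Rightarrow> vec"
  assumes "d \<ge> 2"
    and "bounded_linear_fock d T"
    and "block_diagonal d T"
  shows "\<forall>n m. \<forall>x\<in>Fn d m.
           approx d T n x = (if m \<le> n then T x else restr_tensor_id d T n m x)"
proof (rule allI)
  fix n show "\<forall>m. \<forall>x\<in>Fn d m. approx d T n x = (if m \<le> n then T x else restr_tensor_id d T n m x)"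
  proof (induction n)
    case 0
    show ?case
    proof (intro allI ballI)
      fix m x assume x: "x \<in> Fn d m"
      have "approx d T 0 x = restr_tensor_id d T 0 m x"
      proof
        fix v
        have "restr_tensor_id d T 0 m x v = (\<Sum>J\<in>words d 0. x (J @ drop 0 v) * T (basis_vec J) (take 0 v))"
          by (rule restr_eq[OF _ x]) simp
        also have "words d 0 = {[]}" by (auto simp: words_def valid_word_def)
        finally show "approx d T 0 x v = restr_tensor_id d T 0 m x v" by (simp add: entry_def)
      qed
      thus "approx d T 0 x = (if m \<le> 0 then T x else restr_tensor_id d T 0 m x)"
        using restr_same[OF assms(2,3) x] by auto
    qed
  next
    case (Suc n)
    show ?case
    proof (intro allI ballI)
      fix m x assume x: "x \<in> Fn d m"
      have IH: "approx d T n x = (if m \<le> n then T x else restr_tensor_id d T n m x)"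
        using Suc x by blast
      have A: "approx d T (Suc n) x = (\<lambda>v. approx d T n x v +
         (if take (Suc n) v \<in> words d (Suc n)
          then \<Sum>J\<in>words d (Suc n). coef T (take (Suc n) v) J * x (J @ drop (Suc n) v) else 0))"
        by (simp only: approx.simps S_eq)
      show "approx d T (Suc n) x = (if m \<le> Suc n then T x else restr_tensor_id d T (Suc n) m x)"
      proof (cases "m \<le> n")
        case True
        have "\<And>v. (if take (Suc n) v \<in> words d (Suc n)
          then \<Sum>J\<in>words d (Suc n). coef T (take (Suc n) v) J * x (J @ drop (Suc n) v) else 0) = 0"
        proof -
          fix v
          have "\<And>J. J \<in> words d (Suc n) \<Longrightarrow> x (J @ drop (Suc n) v) = 0"
            using Fn_zero[OF x] True by (auto simp: words_def)
          thus "(if take (Suc n) v \<in> words d (Suc n)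
          then \<Sum>J\<in>words d (Suc n). coef T (take (Suc n) v) J * x (J @ drop (Suc n) v) else 0) = 0"
            by simp
        qed
        thus ?thesis using A IH True by simp
      next
        case False
        have R: "approx d T (Suc n) x = restr_tensor_id d T (Suc n) m x"
        proof
          fix v
          show "approx d T (Suc n) x v = restr_tensor_id d T (Suc n) m x v"
            unfolding A using IH False key[OF assms(3) _ x, of n v]
              restr_eq[OF _ x, of n T v] restr_eq[OF _ x, of "Suc n" T v] by simp
        qed
        show ?thesis
        proof (cases "m = Suc n")
          case True thus ?thesis using R restr_same[OF assms(2,3)] x by simp
        next
          case False thus ?thesis using R \<open>\<not> m \<le> n\<close> by simp
        qed
      qed
    qed
  qed
qed

end
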